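(* Let $m>a\geq0$, $n>b\geq0$ be integers. If there exists a regular erasure pattern $\mathcal{E}\subseteq[m]\times[n]$ that is not correctable in $T_{m\times n}(a,b,0)$, then for any non-negative integers $\delta,\gamma$ there exists a regular erasure pattern $\mathcal{E}'\subseteq[m+\delta]\times[n+\gamma]$ that is not correctable in $T_{(m+\delta)\times(n+\gamma)}(a+\delta,b+\gamma,0)$.
   Context: Positions of vectors in $\mathbb{F}^{mn}$ are identified with $[m]\times[n]$, $[k]=\{1,\dots,k\}$. For linear codes $\mathcal{C}_1\subseteq\mathbb{F}^m,\mathcal{C}_2\subseteq\mathbb{F}^n$, $\mathcal{C}_1\otimes\mathcal{C}_2$ is the row span of the Kronecker product of their generator matrices. A code for the topology $T_{m\times n}(a,b,0)$ is a linear code over a finite field $\mathbb{F}$ whose parity-check matrix is a parity-check matrix of $\mathcal{C}_{\mathsf{col}}\otimes\mathcal{C}_{\mathsf{row}}$, where $\mathcal{C}_{\mathsf{col}}$ is a linear $[m,\geq m-a]$ code and $\mathcal{C}_{\mathsf{row}}$ a linear $[n,\geq n-b]$ code over $\mathbb{F}$; $\mathbb{C}_{m\times n}(a,b,0)$ is the set of these codes (over any finite field). A code corrects an erasure pattern $\mathcal{E}$ if no two distinct codewords agree on all positions outside $\mathcal{E}$; $\mathcal{E}$ is correctable in $T_{m\times n}(a,b,0)$ if some code in $\mathbb{C}_{m\times n}(a,b,0)$ corrects it. An erasure pattern $\mathcal{E}\subseteq[m]\times[n]$ is regular (for $T_{m\times n}(a,b,0)$) if for all $\mathcal{U}\subseteq[m]$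 with $|\mathcal{U}|=u\geq a$ and all $\mathcal{V}\subseteq[n]$ with $|\mathcal{V}|=v\geq b$ one has $|\mathcal{E}\cap(\mathcal{U}\times\mathcal{V})|\leq va+ub-ab$. *)

theory Defs
  imports "HOL-Algebra.Ring" "HOL-Library.FuncSet"
begin

text \<open>Finite fields are represented as HOL-Algebra field structures whose carrier
is a (finite) set of natural numbers; every finite field is isomorphic to such a structure.\<close>

definition grid :: "nat \<Rightarrow> nat \<Rightarrow> (nat \<times> nat) set" where
  "grid m n = {1..m} \<times> {1..n}"

definition vecs :: "nat ring \<Rightarrow> 'p set \<Rightarrow> ('p \<Rightarrow> nat) set" where
  "vecs R P = (P \<rightarrow>\<^sub>E carrier R)"

definition lspan :: "nat ring \<Rightarrow> 'p set \<Rightarrow> ('p \<Rightarrow> nat) set \<Rightarrow> ('p \<Rightarrow> nat) set" where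
  "lspan R P S = {(\<lambda>p\<in>P. finsum R (\<lambda>v. c v \<otimes>\<^bsub>R\<^esub> v p) T) | T c.
                    finite T \<and> T \<subseteq> S \<and> c \<in> T \<rightarrow> carrier R}"

definition linear_code :: "nat ring \<Rightarrow> 'p set \<Rightarrow> ('p \<Rightarrow> nat) set \<Rightarrow> bool" where
  "linear_code R P C \<longleftrightarrow> C \<subseteq> vecs R P \<and> lspan R P C = C"

definition lin_indep :: "nat ring \<Rightarrow> 'p set \<Rightarrow> (nat \<Rightarrow> 'p \<Rightarrow> nat) \<Rightarrow> nat \<Rightarrow> bool" where
  "lin_indep R P vs k \<longleftrightarrow>
     (\<forall>c \<in> {..<k} \<rightarrow> carrier R.
        (\<forall>p\<in>P. finsum R (\<lambda>i. c i \<otimes>\<^bsub>R\<^esub> vs i p) {..<k} = \<zero>\<^bsub>R\<^esub>) \<longrightarrow> (\<forall>i<k. c i = \<zero>\<^bsub>R\<^esub>))"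

definition dim_ge :: "nat ring \<Rightarrow> 'p set \<Rightarrow> ('p \<Rightarrow> nat) set \<Rightarrow> nat \<Rightarrow> bool" where
  "dim_ge R P C k \<longleftrightarrow> (\<exists>vs. (\<forall>i<k. vs i \<in> C) \<and> lin_indep R P vs k)"

text \<open>Tensor product code C1 \<otimes> C2 (row span of the Kronecker product of generator
matrices = span of all outer products x \<otimes> y with x \<in> C1, y \<in> C2).\<close>
definition tensor_code :: "nat ring \<Rightarrow> nat \<Rightarrow> nat \<Rightarrow> (nat \<Rightarrow> nat) set \<Rightarrow> (nat \<Rightarrow> nat) set
    \<Rightarrow> (nat \<times> nat \<Rightarrow> nat) set" where
  "tensor_code R m n C1 C2 =
     lspan R (grid m n) {(\<lambda>(i,j)\<in>grid m n. x i \<otimes>\<^bsub>R\<^esub> y j) | x y. x \<in> C1 \<and> y \<in> C2}"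

definition topology_code :: "nat ring \<Rightarrow> nat \<Rightarrow> nat \<Rightarrow> nat \<Rightarrow> nat \<Rightarrow> (nat \<times> nat \<Rightarrow> nat) set \<Rightarrow> bool" where
  "topology_code R m n a b C \<longleftrightarrow>
     (\<exists>C1 C2. linear_code R {1..m} C1 \<and> dim_ge R {1..m} C1 (m - a) \<and>
              linear_code R {1..n} C2 \<and> dim_ge R {1..n} C2 (n - b) \<and>
              C = tensor_code R m n C1 C2)"

definition corrects :: "'p set \<Rightarrow> ('p \<Rightarrow> nat) set \<Rightarrow> 'p set \<Rightarrow> bool" where
  "corrects P C E \<longleftrightarrow> (\<forall>x\<in>C. \<forall>y\<in>C. (\<forall>p \<in> P - E. x p = y p) \<longrightarrow> x = y)"

definition correctable :: "nat \<Rightarrow> nat \<Rightarrow> nat \<Rightarrow> nat \<Rightarrow> (nat \<times> nat) set \<Rightarrow> bool" where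
  "correctable m n a b E \<longleftrightarrow>
     (\<exists>R :: nat ring. field R \<and> finite (carrier R) \<and>
        (\<exists>C. topology_code R m n a b C \<and> corrects (grid m n) C E))"

definition regular :: "nat \<Rightarrow> nat \<Rightarrow> nat \<Rightarrow> nat \<Rightarrow> (nat \<times> nat) set \<Rightarrow> bool" where
  "regular m n a b E \<longleftrightarrow>
     (\<forall>U V. U \<subseteq> {1..m} \<and> V \<subseteq> {1..n} \<and> a \<le> card U \<and> b \<le> card V \<longrightarrow>
        int (card (E \<inter> (U \<times> V))) \<le> int (card V) * int a + int (card U) * int b - int a * int b)"

end

theory Submission
  imports Defs
begin


lemma lspanI:
  "finite T \<Longrightarrow> T \<subseteq> S \<Longrightarrow> c \<in> T \<rightarrow> carrier R \<Longrightarrow>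
   z = (\<lambda>p\<in>P. finsum R (\<lambda>v. c v \<otimes>\<^bsub>R\<^esub> v p) T) \<Longrightarrow> z \<in> lspan R P S"
  unfolding lspan_def by blast

lemma fsing:
  fixes R :: "nat ring" (structure)
  assumes R: "ring R" and "f x \<in> carrier R"
  shows "finsum R f {x} = f x"
proof -
  interpret ring R by (rule R)
  have "finsum R f (insert x {}) = f x \<oplus> finsum R f {}"
    by (rule finsum_insert) (use assms in auto)
  then show ?thesis using assms by simp
qed

lemma span_sub:
  fixes R :: "nat ring" (structure)
  assumes R: "ring R" and S: "S \<subseteq> vecs R P"
  shows "S \<subseteq> lspan R P S"
proof
  fix v assume v: "v \<in> S"
  interpret ring R by (rule R)
  have vc: "v \<in> P \<rightarrow>\<^sub>E carrier R" using v S unfolding vecs_def by blast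
  have "v = (\<lambda>p\<in>P. finsum R (\<lambda>w. (\<lambda>_. \<one>) w \<otimes> w p) {v})"
  proof
    fix p show "v p = (\<lambda>p\<in>P. finsum R (\<lambda>w. (\<lambda>_. \<one>) w \<otimes> w p) {v}) p"
    proof (cases "p \<in> P")
      case True
      then have "v p \<in> carrier R" using vc by auto
      then show ?thesis using True fsing[OF R, of "\<lambda>w. \<one> \<otimes> w p" v] by simp
    next
      case False then show ?thesis using vc by auto
    qed
  qed
  then show "v \<in> lspan R P S" by (rule lspanI[rotated 3]) (use v in auto)
qed

lemma code_zero:
  fixes R :: "nat ring" (structure)
  assumes R: "ring R" and C: "linear_code R P C"
  shows "(\<lambda>p\<in>P. \<zero>) \<in> C"
proof -
  interpret ring R by (rule R)
  have "(\<lambda>p\<in>P. \<zero>) \<in> lspan R P C"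
    by (rule lspanI[of "{}" _ "\<lambda>_. \<one>"]) auto
  then show ?thesis using C unfolding linear_code_def by simp
qed

lemma code_smult:
  fixes R :: "nat ring" (structure)
  assumes R: "ring R" and C: "linear_code R P C" and v: "v \<in> C" and r: "r \<in> carrier R"
  shows "(\<lambda>p\<in>P. r \<otimes> v p) \<in> C"
proof -
  interpret ring R by (rule R)
  have vc: "v \<in> P \<rightarrow>\<^sub>E carrier R" using v C unfolding vecs_def linear_code_def by blast
  have "(\<lambda>p\<in>P. r \<otimes> v p) \<in> lspan R P C"
  proof (rule lspanI[of "{v}" _ "\<lambda>_. r"])
    show "(\<lambda>p\<in>P. r \<otimes> v p) = (\<lambda>p\<in>P. \<Oplus>w\<in>{v}. (\<lambda>_. r) w \<otimes> w p)"
    proof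
      fix p show "(\<lambda>p\<in>P. r \<otimes> v p) p = (\<lambda>p\<in>P. \<Oplus>w\<in>{v}. (\<lambda>_. r) w \<otimes> w p) p"
      proof (cases "p \<in> P")
        case True
        then have "v p \<in> carrier R" using vc by auto
        then show ?thesis using True r fsing[OF R, of "\<lambda>w. r \<otimes> w p" v] by simp
      qed simp
    qed
  qed (use v r in auto)
  then show ?thesis using C unfolding linear_code_def by simp
qed

lemma code_add:
  fixes R :: "nat ring" (structure)
  assumes R: "ring R" and C: "linear_code R P C" and u: "u \<in> C" and v: "v \<in> C"
  shows "(\<lambda>p\<in>P. u p \<oplus> v p) \<in> C"
proof -
  interpret ring R by (rule R)
  have vc: "v \<in> P \<rightarrow>\<^sub>E carrier R" using v C unfolding vecs_def linear_code_def by blast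
  have uc: "u \<in> P \<rightarrow>\<^sub>E carrier R" using u C unfolding vecs_def linear_code_def by blast
  show ?thesis
  proof (cases "u = v")
    case True
    have "(\<lambda>p\<in>P. (\<one> \<oplus> \<one>) \<otimes> v p) \<in> C" using code_smult[OF R C v] by simp
    moreover have "(\<lambda>p\<in>P. (\<one> \<oplus> \<one>) \<otimes> v p) = (\<lambda>p\<in>P. u p \<oplus> v p)"
    proof
      fix p show "(\<lambda>p\<in>P. (\<one> \<oplus> \<one>) \<otimes> v p) p = (\<lambda>p\<in>P. u p \<oplus> v p) p"
      proof (cases "p \<in> P")
        case True
        then have "v p \<in> carrier R" using vc by auto
        then show ?thesis using True \<open>u = v\<close> by (simp add: l_distr)
      qed simp
    qed
    ultimately show ?thesis by simp
  next
    case False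
    have "(\<lambda>p\<in>P. u p \<oplus> v p) \<in> lspan R P C"
    proof (rule lspanI[of "{u,v}" _ "\<lambda>_. \<one>"])
      show "(\<lambda>p\<in>P. u p \<oplus> v p) = (\<lambda>p\<in>P. \<Oplus>w\<in>{u,v}. (\<lambda>_. \<one>) w \<otimes> w p)"
      proof
        fix p show "(\<lambda>p\<in>P. u p \<oplus> v p) p = (\<lambda>p\<in>P. \<Oplus>w\<in>{u,v}. (\<lambda>_. \<one>) w \<otimes> w p) p"
        proof (cases "p \<in> P")
          case True
          then have a: "v p \<in> carrier R" "u p \<in> carrier R" using vc uc by auto
          have "(\<Oplus>w\<in>insert u {v}. \<one> \<otimes> w p) = \<one> \<otimes> u p \<oplus> (\<Oplus>w\<in>{v}. \<one> \<otimes> w p)"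
            by (rule finsum_insert) (use a False in auto)
          then show ?thesis using True a fsing[OF R, of "\<lambda>w. \<one> \<otimes> w p" v] by simp
        qed simp
      qed
    qed (use u v in auto)
    then show ?thesis using C unfolding linear_code_def by simp
  qed
qed


lemma code_comb:
  fixes R :: "nat ring" (structure)
  assumes R: "ring R" and C: "linear_code R P C" and I: "finite I"
    and f: "f \<in> I \<rightarrow> C" and c: "c \<in> I \<rightarrow> carrier R"
  shows "(\<lambda>p\<in>P. finsum R (\<lambda>i. c i \<otimes> f i p) I) \<in> C"
  using I f c
proof (induction I rule: finite_induct)
  case empty
  interpret ring R by (rule R)
  have eq: "(\<lambda>p\<in>P. finsum R (\<lambda>i. c i \<otimes> f i p) {}) = (\<lambda>p\<in>P. \<zero>)" by simp
  show ?case unfolding eq by (rule code_zero[OF R C])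
next
  case (insert i I)
  interpret ring R by (rule R)
  have fc: "\<And>j p. j \<in> insert i I \<Longrightarrow> p \<in> P \<Longrightarrow> f j p \<in> carrier R"
    using insert.prems C unfolding linear_code_def vecs_def by blast
  have ci: "\<And>j. j \<in> insert i I \<Longrightarrow> c j \<in> carrier R" using insert.prems by blast
  have a: "(\<lambda>p\<in>P. c i \<otimes> f i p) \<in> C" using code_smult[OF R C] insert.prems by auto
  have b: "(\<lambda>p\<in>P. finsum R (\<lambda>i. c i \<otimes> f i p) I) \<in> C"
    by (rule insert.IH) (use insert.prems in auto)
  have "(\<lambda>p\<in>P. (\<lambda>p\<in>P. c i \<otimes> f i p) p \<oplus> (\<lambda>p\<in>P. finsum R (\<lambda>i. c i \<otimes> f i p) I) p) \<in> C"
    by (rule code_add[OF R C a b])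
  moreover have "(\<lambda>p\<in>P. (\<lambda>p\<in>P. c i \<otimes> f i p) p \<oplus> (\<lambda>p\<in>P. finsum R (\<lambda>i. c i \<otimes> f i p) I) p)
     = (\<lambda>p\<in>P. finsum R (\<lambda>i. c i \<otimes> f i p) (insert i I))"
  proof
    fix p show "(\<lambda>p\<in>P. (\<lambda>p\<in>P. c i \<otimes> f i p) p \<oplus> (\<lambda>p\<in>P. finsum R (\<lambda>i. c i \<otimes> f i p) I) p) p
     = (\<lambda>p\<in>P. finsum R (\<lambda>i. c i \<otimes> f i p) (insert i I)) p"
    proof (cases "p \<in> P")
      case True
      have "finsum R (\<lambda>i. c i \<otimes> f i p) (insert i I) = c i \<otimes> f i p \<oplus> finsum R (\<lambda>i. c i \<otimes> f i p) I"
        by (rule finsum_insert) (use insert.hyps fc ci True in auto)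
      then show ?thesis using True by simp
    qed simp
  qed
  ultimately have "(\<lambda>p\<in>P. finsum R (\<lambda>i. c i \<otimes> f i p) (insert i I)) \<in> C" by simp
  then show ?case by (simp add: restrict_def)
qed

lemma lift:
  fixes R :: "nat ring" (structure)
  assumes R: "ring R" and QP: "Q \<subseteq> P" and T: "finite T"
    and TS: "T \<subseteq> (\<lambda>w. restrict w Q) ` S'"
    and Sc: "\<And>w p. w \<in> S' \<Longrightarrow> p \<in> P \<Longrightarrow> w p \<in> carrier R"
    and c: "c \<in> T \<rightarrow> carrier R"
  shows "\<exists>z' \<in> lspan R P S'. restrict z' Q = (\<lambda>q\<in>Q. finsum R (\<lambda>v. c v \<otimes> v q) T)"
proof -
  interpret ring R by (rule R)
  define g where "g t = (SOME w. w \<in> S' \<and> restrict w Q = t)" for t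
  have g: "g t \<in> S' \<and> restrict (g t) Q = t" if tT: "t \<in> T" for t
  proof -
    obtain w where "w \<in> S'" "restrict w Q = t" using TS tT by blast
    then show ?thesis unfolding g_def by (rule someI[of _ w, OF conjI])
  qed
  have inj: "inj_on g T" by (metis g inj_onI)
  define c' where "c' w = c (restrict w Q)" for w
  define z' where "z' = (\<lambda>p\<in>P. finsum R (\<lambda>w. c' w \<otimes> w p) (g ` T))"
  have "z' \<in> lspan R P S'"
    by (rule lspanI[of "g ` T" _ c']) (use T g c in \<open>auto simp: c'_def z'_def\<close>)
  moreover have "restrict z' Q = (\<lambda>q\<in>Q. finsum R (\<lambda>v. c v \<otimes> v q) T)"
  proof
    fix q show "restrict z' Q q = (\<lambda>q\<in>Q. finsum R (\<lambda>v. c v \<otimes> v q) T) q"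
    proof (cases "q \<in> Q")
      case True
      then have qP: "q \<in> P" using QP by auto
      have gq: "g t q = t q" if "t \<in> T" for t
        using g[OF that] True by (metis restrict_apply')
      have tq: "t q \<in> carrier R" if "t \<in> T" for t
        using g[OF that] gq[OF that] Sc qP by metis
      have "finsum R (\<lambda>w. c' w \<otimes> w q) (g ` T) = finsum R (\<lambda>t. c' (g t) \<otimes> g t q) T"
        by (rule finsum_reindex[OF _ inj]) (use g c Sc qP in \<open>auto simp: c'_def intro!: m_closed\<close>)
      also have "\<dots> = finsum R (\<lambda>t. c t \<otimes> t q) T"
        by (rule finsum_cong') (use g c Sc qP gq tq in \<open>auto simp: c'_def\<close>)
      finally show ?thesis using True qP by (simp add: z'_def)
    qed simp
  qed
  ultimately show ?thesis by blast
qed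


lemma restr_code:
  fixes R :: "nat ring" (structure)
  assumes R: "ring R" and C: "linear_code R P C" and QP: "Q \<subseteq> P"
  shows "linear_code R Q ((\<lambda>x. restrict x Q) ` C)"
proof -
  interpret ring R by (rule R)
  have Cv: "C \<subseteq> P \<rightarrow>\<^sub>E carrier R" using C unfolding linear_code_def vecs_def by blast
  have sub: "(\<lambda>x. restrict x Q) ` C \<subseteq> vecs R Q"
  proof
    fix z assume "z \<in> (\<lambda>x. restrict x Q) ` C"
    then obtain x where x: "x \<in> C" "z = restrict x Q" by blast
    have "\<And>q. q \<in> Q \<Longrightarrow> x q \<in> carrier R" using x Cv QP by blast
    then show "z \<in> vecs R Q" unfolding vecs_def using x by auto
  qed
  have "lspan R Q ((\<lambda>x. restrict x Q) ` C) \<subseteq> (\<lambda>x. restrict x Q) ` C"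
  proof
    fix z assume "z \<in> lspan R Q ((\<lambda>x. restrict x Q) ` C)"
    then obtain T c where z: "z = (\<lambda>q\<in>Q. finsum R (\<lambda>v. c v \<otimes> v q) T)" and
      T: "finite T" "T \<subseteq> (\<lambda>x. restrict x Q) ` C" and c: "c \<in> T \<rightarrow> carrier R"
      unfolding lspan_def by blast
    have Sc: "\<And>w p. w \<in> C \<Longrightarrow> p \<in> P \<Longrightarrow> w p \<in> carrier R" using Cv by auto
    have "\<exists>z'\<in>lspan R P C. restrict z' Q = (\<lambda>q\<in>Q. finsum R (\<lambda>v. c v \<otimes> v q) T)"
      by (rule lift[OF R QP T(1) T(2) _ c]) (rule Sc)
    then obtain z' where "z' \<in> lspan R P C" "restrict z' Q = z" using z by blast
    then show "z \<in> (\<lambda>x. restrict x Q) ` C" using C unfolding linear_code_def by blast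
  qed
  then show ?thesis using span_sub[OF R sub] sub unfolding linear_code_def by blast
qed

lemma restr_dim:
  fixes R :: "nat ring" (structure)
  assumes R: "ring R" and C: "linear_code R P C" and QP: "Q \<subseteq> P" and D: "dim_ge R P C k"
    and H: "\<And>w. w \<in> C \<Longrightarrow> (\<forall>q\<in>Q. w q = \<zero>) \<Longrightarrow> (\<forall>p\<in>P. w p = \<zero>)"
  shows "dim_ge R Q ((\<lambda>x. restrict x Q) ` C) k"
proof -
  interpret ring R by (rule R)
  obtain vs where vs: "\<forall>i<k. vs i \<in> C" and li: "lin_indep R P vs k"
    using D unfolding dim_ge_def by blast
  have "lin_indep R Q (\<lambda>i. restrict (vs i) Q) k"
    unfolding lin_indep_def
  proof (intro ballI impI)
    fix c assume c: "c \<in> {..<k} \<rightarrow> carrier R"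
      and z: "\<forall>p\<in>Q. (\<Oplus>i\<in>{..<k}. c i \<otimes> restrict (vs i) Q p) = \<zero>"
    define w where "w = (\<lambda>p\<in>P. finsum R (\<lambda>i. c i \<otimes> vs i p) {..<k})"
    have wC: "w \<in> C" unfolding w_def by (rule code_comb[OF R C]) (use vs c in auto)
    have "\<forall>q\<in>Q. w q = \<zero>"
    proof
      fix q assume q: "q \<in> Q"
      then have "w q = (\<Oplus>i\<in>{..<k}. c i \<otimes> restrict (vs i) Q q)" using QP by (auto simp: w_def)
      then show "w q = \<zero>" using z q by simp
    qed
    then have "\<forall>p\<in>P. w p = \<zero>" using H[OF wC] by blast
    then have "\<forall>p\<in>P. (\<Oplus>i\<in>{..<k}. c i \<otimes> vs i p) = \<zero>" by (auto simp: w_def)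
    then show "\<forall>i<k. c i = \<zero>" using li c unfolding lin_indep_def by blast
  qed
  moreover have "\<forall>i<k. restrict (vs i) Q \<in> (\<lambda>x. restrict x Q) ` C" using vs by blast
  ultimately show ?thesis unfolding dim_ge_def
    by (intro exI[of _ "\<lambda>i. restrict (vs i) Q"] conjI) auto
qed

lemma nonzero_vec:
  fixes R :: "nat ring" (structure)
  assumes R: "field R" and C: "linear_code R P C" and D: "dim_ge R P C k" and k: "0 < k"
  shows "\<exists>y\<in>C. \<exists>p\<in>P. y p \<noteq> \<zero>"
proof (rule ccontr)
  assume N: "\<not> ?thesis"
  interpret field R by (rule R)
  obtain vs where vs: "\<forall>i<k. vs i \<in> C" and li: "lin_indep R P vs k"
    using D unfolding dim_ge_def by blast
  have vc: "vs i p \<in> carrier R" if "i < k" "p \<in> P" for i p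
    using vs C that unfolding linear_code_def vecs_def by blast
  define c where "c i = (if i = 0 then \<one> else \<zero>)" for i :: nat
  have cc: "c \<in> {..<k} \<rightarrow> carrier R" by (auto simp: c_def)
  have "\<forall>p\<in>P. (\<Oplus>i\<in>{..<k}. c i \<otimes> vs i p) = \<zero>"
  proof
    fix p assume p: "p \<in> P"
    have "(\<Oplus>i\<in>{..<k}. c i \<otimes> vs i p) = (\<Oplus>i\<in>{..<k}. \<zero>)"
    proof (rule finsum_cong')
      show "\<And>i. i \<in> {..<k} \<Longrightarrow> c i \<otimes> vs i p = \<zero>"
        using N vs k p vc by (auto simp: c_def)
    qed auto
    then show "(\<Oplus>i\<in>{..<k}. c i \<otimes> vs i p) = \<zero>" by simp
  qed
  then have "c 0 = \<zero>" using li cc k unfolding lin_indep_def by blast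
  then show False by (simp add: c_def)
qed



lemma arith_key:
  fixes e u0 u1 v0 v1 a b d g :: int
  assumes "e \<le> v0*a + u0*b - a*b" "u1 \<le> d" "v1 \<le> g" "u0 + u1 \<ge> a + d" "v0 + v1 \<ge> b + g"
    "0 \<le> u1" "0 \<le> v1"
  shows "e + u1*(v0+v1) + u0*v1 \<le> (v0+v1)*(a+d) + (u0+u1)*(b+g) - (a+d)*(b+g)"
proof -
  have id: "(v0+v1)*(a+d) + (u0+u1)*(b+g) - (a+d)*(b+g) - (v0*a + u0*b - a*b + u1*(v0+v1) + u0*v1)
      = (d-u1)*(v0+v1-b-g) + (g-v1)*(u0-a)" by (simp add: algebra_simps)
  have "0 \<le> (d-u1)*(v0+v1-b-g)" using assms by simp
  moreover have "0 \<le> (g-v1)*(u0-a)" using assms by simp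
  ultimately show ?thesis using id assms(1) by linarith
qed

lemma reg_ext:
  assumes Eg: "E \<subseteq> grid m n" and reg: "regular m n a b E"
  shows "regular (m+d) (n+g) (a+d) (b+g) (E \<union> (grid (m+d) (n+g) - grid m n))"
  unfolding regular_def
proof (intro allI impI)
  fix U V assume H: "U \<subseteq> {1..m+d} \<and> V \<subseteq> {1..n+g} \<and> a + d \<le> card U \<and> b + g \<le> card V"
  define U0 where "U0 = U \<inter> {1..m}"
  define U1 where "U1 = U - {1..m}"
  define V0 where "V0 = V \<inter> {1..n}"
  define V1 where "V1 = V - {1..n}"
  have fU: "finite U" "finite V" using H finite_subset by blast+
  have cU: "card U = card U0 + card U1" unfolding U0_def U1_def using fU
    by (metis Diff_Diff_Int card_Diff_subset_Int finite_Diff finite_Int inf.cobounded1 inf_commute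
        le_add_diff_inverse card_mono)
  have cV: "card V = card V0 + card V1" unfolding V0_def V1_def using fU
    by (metis Diff_Diff_Int card_Diff_subset_Int finite_Diff finite_Int inf.cobounded1 inf_commute
        le_add_diff_inverse card_mono)
  have U1s: "U1 \<subseteq> {m+1..m+d}" using H unfolding U1_def by auto
  have V1s: "V1 \<subseteq> {n+1..n+g}" using H unfolding V1_def by auto
  have cU1: "card U1 \<le> d" using card_mono[OF _ U1s] by simp
  have cV1: "card V1 \<le> g" using card_mono[OF _ V1s] by simp
  have sub: "(E \<union> (grid (m+d) (n+g) - grid m n)) \<inter> (U \<times> V) \<subseteq>
      (E \<inter> (U0 \<times> V0)) \<union> (U1 \<times> V) \<union> (U0 \<times> V1)"
    using Eg H unfolding U0_def U1_def V0_def V1_def grid_def by auto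
  have fin: "finite ((E \<inter> (U0 \<times> V0)) \<union> (U1 \<times> V) \<union> (U0 \<times> V1))"
  proof (rule finite_subset[of _ "U \<times> V"])
    show "finite (U \<times> V)" using fU by simp
  qed (auto simp: U0_def U1_def V0_def V1_def)
  have "card ((E \<union> (grid (m+d) (n+g) - grid m n)) \<inter> (U \<times> V)) \<le>
      card ((E \<inter> (U0 \<times> V0)) \<union> (U1 \<times> V) \<union> (U0 \<times> V1))"
    by (rule card_mono[OF fin sub])
  also have "\<dots> \<le> card (E \<inter> (U0 \<times> V0)) + card (U1 \<times> V) + card (U0 \<times> V1)"
    by (meson add_le_mono card_Un_le le_refl order_trans)
  also have "\<dots> = card (E \<inter> (U0 \<times> V0)) + card U1 * card V + card U0 * card V1"
    by (simp add: card_cartesian_product)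
  finally have c1: "card ((E \<union> (grid (m+d) (n+g) - grid m n)) \<inter> (U \<times> V)) \<le>
      card (E \<inter> (U0 \<times> V0)) + card U1 * card V + card U0 * card V1" .
  have "int (card (E \<inter> (U0 \<times> V0))) \<le> int (card V0) * int a + int (card U0) * int b - int a * int b"
    using reg H cU cV cU1 cV1 unfolding regular_def U0_def V0_def by auto
  from arith_key[OF this, of "int (card U1)" "int d" "int (card V1)" "int g"]
  have k: "int (card (E \<inter> (U0 \<times> V0))) + int (card U1) * (int (card V0) + int (card V1)) + int (card U0) * int (card V1)
     \<le> (int (card V0) + int (card V1)) * (int a + int d) + (int (card U0) + int (card U1)) * (int b + int g) - (int a + int d) * (int b + int g)"
    using H cU cV cU1 cV1 by linarith
  have c2: "int (card ((E \<union> (grid (m+d) (n+g) - grid m n)) \<inter> (U \<times> V))) \<le>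
      int (card (E \<inter> (U0 \<times> V0))) + int (card U1) * int (card V) + int (card U0) * int (card V1)"
    using c1 by (metis of_nat_add of_nat_le_iff of_nat_mult)
  show "int (card ((E \<union> (grid (m+d) (n+g) - grid m n)) \<inter> (U \<times> V)))
       \<le> int (card V) * int (a + d) + int (card U) * int (b + g) - int (a + d) * int (b + g)"
    using c2 k cU cV by (simp add: algebra_simps)
qed


lemma noncorr_core:
  fixes R :: "nat ring" (structure)
  assumes am: "a < m" and bn: "b < n" and Eg: "E \<subseteq> grid m n"
    and F: "field R" and fin: "finite (carrier R)"
    and E'_def: "E' = E \<union> (grid M N - grid m n)"
    and MN: "m \<le> M" "n \<le> N"
    and L1: "linear_code R {1..M} C1'" and D1: "dim_ge R {1..M} C1' (m - a)"
    and L2: "linear_code R {1..N} C2'" and D2: "dim_ge R {1..N} C2' (n - b)"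
    and CO: "corrects (grid M N) (tensor_code R M N C1' C2') E'"
  shows "correctable m n a b E"
proof -
  interpret field R by (rule F)
  have Rr: "ring R" by (rule is_ring)
  have C1v: "\<And>x i. x \<in> C1' \<Longrightarrow> i \<in> {1..M} \<Longrightarrow> x i \<in> carrier R"
    using L1 unfolding linear_code_def vecs_def by blast
  have C2v: "\<And>x i. x \<in> C2' \<Longrightarrow> i \<in> {1..N} \<Longrightarrow> x i \<in> carrier R"
    using L2 unfolding linear_code_def vecs_def by blast
  have mM: "{1..m} \<subseteq> {1..M}" and nN: "{1..n} \<subseteq> {1..N}" using MN by auto
  have gg: "grid m n \<subseteq> grid M N" using mM nN unfolding grid_def by auto
  define SO where "SO = {(\<lambda>(i,j)\<in>grid M N. x i \<otimes> y j) | x y. x \<in> C1' \<and> y \<in> C2'}"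
  have SOc: "\<And>w p. w \<in> SO \<Longrightarrow> p \<in> grid M N \<Longrightarrow> w p \<in> carrier R"
    unfolding SO_def grid_def using C1v C2v by auto
  have SOv: "SO \<subseteq> vecs R (grid M N)"
  proof
    fix w assume "w \<in> SO"
    then obtain x y where xy: "x \<in> C1'" "y \<in> C2'" "w = (\<lambda>(i,j)\<in>grid M N. x i \<otimes> y j)"
      unfolding SO_def by blast
    show "w \<in> vecs R (grid M N)" unfolding vecs_def xy(3)
      using xy C1v C2v by (auto simp: grid_def)
  qed
  have TC: "tensor_code R M N C1' C2' = lspan R (grid M N) SO"
    unfolding tensor_code_def SO_def by simp
  have zero_in: "(\<lambda>p\<in>grid M N. \<zero>) \<in> tensor_code R M N C1' C2'"
    unfolding TC by (rule lspanI[of "{}" _ "\<lambda>_. \<one>"]) auto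
  obtain y0 j0 where y0: "y0 \<in> C2'" "j0 \<in> {1..N}" "y0 j0 \<noteq> \<zero>"
    using nonzero_vec[OF F L2 D2] bn by auto
  obtain x0 i0 where x0: "x0 \<in> C1'" "i0 \<in> {1..M}" "x0 i0 \<noteq> \<zero>"
    using nonzero_vec[OF F L1 D1] am by auto
  have H1: "\<forall>p\<in>{1..M}. w p = \<zero>" if w: "w \<in> C1'" "\<forall>q\<in>{1..m}. w q = \<zero>" for w
  proof -
    define z where "z = (\<lambda>(i,j)\<in>grid M N. w i \<otimes> y0 j)"
    have "z \<in> SO" unfolding z_def SO_def using w y0 by blast
    then have zT: "z \<in> tensor_code R M N C1' C2'" unfolding TC using span_sub[OF Rr SOv] by blast
    have "\<forall>p\<in>grid M N - E'. z p = (\<lambda>p\<in>grid M N. \<zero>) p"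
    proof
      fix p assume p: "p \<in> grid M N - E'"
      obtain i j where ij: "p = (i,j)" by force
      have "i \<in> {1..m}" "j \<in> {1..N}" using p ij unfolding E'_def grid_def by auto
      then show "z p = (\<lambda>p\<in>grid M N. \<zero>) p" using p ij w y0 C2v by (auto simp: z_def)
    qed
    then have zz: "z = (\<lambda>p\<in>grid M N. \<zero>)" using CO zT zero_in unfolding corrects_def by blast
    show ?thesis
    proof
      fix i assume i: "i \<in> {1..M}"
      have "(i, j0) \<in> grid M N" using i y0 unfolding grid_def by auto
      then have "w i \<otimes> y0 j0 = \<zero>" using zz unfolding z_def
        by (metis (no_types, lifting) case_prod_conv restrict_apply')
      then show "w i = \<zero>" using integral_iff C1v[OF w(1) i] C2v[OF y0(1,2)] y0(3) by blast
    qed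
  qed
  have H2: "\<forall>p\<in>{1..N}. w p = \<zero>" if w: "w \<in> C2'" "\<forall>q\<in>{1..n}. w q = \<zero>" for w
  proof -
    define z where "z = (\<lambda>(i,j)\<in>grid M N. x0 i \<otimes> w j)"
    have "z \<in> SO" unfolding z_def SO_def using w x0 by blast
    then have zT: "z \<in> tensor_code R M N C1' C2'" unfolding TC using span_sub[OF Rr SOv] by blast
    have "\<forall>p\<in>grid M N - E'. z p = (\<lambda>p\<in>grid M N. \<zero>) p"
    proof
      fix p assume p: "p \<in> grid M N - E'"
      obtain i j where ij: "p = (i,j)" by force
      have "j \<in> {1..n}" "i \<in> {1..M}" using p ij unfolding E'_def grid_def by auto
      then show "z p = (\<lambda>p\<in>grid M N. \<zero>) p" using p ij w x0 C1v by (auto simp: z_def)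
    qed
    then have zz: "z = (\<lambda>p\<in>grid M N. \<zero>)" using CO zT zero_in unfolding corrects_def by blast
    show ?thesis
    proof
      fix j assume j: "j \<in> {1..N}"
      have "(i0, j) \<in> grid M N" using j x0 unfolding grid_def by auto
      then have "x0 i0 \<otimes> w j = \<zero>" using zz unfolding z_def
        by (metis (no_types, lifting) case_prod_conv restrict_apply')
      then show "w j = \<zero>" using integral_iff C2v[OF w(1) j] C1v[OF x0(1,2)] x0(3) by blast
    qed
  qed
  define C1 where "C1 = (\<lambda>x. restrict x {1..m}) ` C1'"
  define C2 where "C2 = (\<lambda>x. restrict x {1..n}) ` C2'"
  have l1: "linear_code R {1..m} C1" unfolding C1_def by (rule restr_code[OF Rr L1 mM])
  have l2: "linear_code R {1..n} C2" unfolding C2_def by (rule restr_code[OF Rr L2 nN])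
  have d1: "dim_ge R {1..m} C1 (m - a)" unfolding C1_def
    by (rule restr_dim[OF Rr L1 mM D1]) (use H1 in blast)
  have d2: "dim_ge R {1..n} C2 (n - b)" unfolding C2_def
    by (rule restr_dim[OF Rr L2 nN D2]) (use H2 in blast)
  define So where "So = {(\<lambda>(i,j)\<in>grid m n. x i \<otimes> y j) | x y. x \<in> C1 \<and> y \<in> C2}"
  have So_sub: "So \<subseteq> (\<lambda>w. restrict w (grid m n)) ` SO"
  proof
    fix t assume "t \<in> So"
    then obtain x y where xy: "x \<in> C1'" "y \<in> C2'"
      "t = (\<lambda>(i,j)\<in>grid m n. restrict x {1..m} i \<otimes> restrict y {1..n} j)"
      unfolding So_def C1_def C2_def by blast
    have "t = restrict (\<lambda>(i,j)\<in>grid M N. x i \<otimes> y j) (grid m n)"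
    proof
      fix p show "t p = restrict (\<lambda>(i,j)\<in>grid M N. x i \<otimes> y j) (grid m n) p"
        using xy(3) gg MN by (cases p) (auto simp: grid_def)
    qed
    moreover have "(\<lambda>(i,j)\<in>grid M N. x i \<otimes> y j) \<in> SO" unfolding SO_def using xy by blast
    ultimately show "t \<in> (\<lambda>w. restrict w (grid m n)) ` SO" by blast
  qed
  have liftT: "\<exists>x'\<in>tensor_code R M N C1' C2'. restrict x' (grid m n) = x"
    if x: "x \<in> tensor_code R m n C1 C2" for x
  proof -
    obtain T c where xd: "x = (\<lambda>q\<in>grid m n. finsum R (\<lambda>v. c v \<otimes> v q) T)" and
      T: "finite T" "T \<subseteq> So" and c: "c \<in> T \<rightarrow> carrier R"
      using x unfolding tensor_code_def lspan_def So_def by blast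
    have T2: "T \<subseteq> (\<lambda>w. restrict w (grid m n)) ` SO" using T(2) So_sub by blast
    have "\<exists>z'\<in>lspan R (grid M N) SO. restrict z' (grid m n) = (\<lambda>q\<in>grid m n. finsum R (\<lambda>v. c v \<otimes> v q) T)"
      by (rule lift[OF Rr gg T(1) T2 _ c]) (rule SOc)
    then show ?thesis using xd TC by simp
  qed
  have cor1: "corrects (grid m n) (tensor_code R m n C1 C2) E"
    unfolding corrects_def
  proof (intro ballI impI)
    fix x y assume x: "x \<in> tensor_code R m n C1 C2" and y: "y \<in> tensor_code R m n C1 C2"
      and agree: "\<forall>p\<in>grid m n - E. x p = y p"
    obtain x' where x': "x' \<in> tensor_code R M N C1' C2'" "restrict x' (grid m n) = x"
      using liftT[OF x] by blast
    obtain y' where y': "y' \<in> tensor_code R M N C1' C2'" "restrict y' (grid m n) = y"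
      using liftT[OF y] by blast
    have "\<forall>p\<in>grid M N - E'. x' p = y' p"
    proof
      fix p assume p: "p \<in> grid M N - E'"
      then have pm: "p \<in> grid m n - E" unfolding E'_def by auto
      have "x' p = x p" using x'(2) pm by auto
      moreover have "y' p = y p" using y'(2) pm by auto
      ultimately show "x' p = y' p" using agree pm by simp
    qed
    then have "x' = y'" using CO x'(1) y'(1) unfolding corrects_def by blast
    then show "x = y" using x'(2) y'(2) by simp
  qed
  show ?thesis unfolding correctable_def topology_code_def
    using F fin l1 l2 d1 d2 cor1 by blast
qed

lemma noncorr:
  assumes am: "a < m" and bn: "b < n" and Eg: "E \<subseteq> grid m n"
    and cor: "correctable (m+d) (n+g) (a+d) (b+g) (E \<union> (grid (m+d) (n+g) - grid m n))"
  shows "correctable m n a b E"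
proof -
  obtain R :: "nat ring" where F: "field R" and fin: "finite (carrier R)" and
    C: "\<exists>C. topology_code R (m+d) (n+g) (a+d) (b+g) C \<and>
          corrects (grid (m+d) (n+g)) C (E \<union> (grid (m+d) (n+g) - grid m n))"
    using cor unfolding correctable_def by blast
  obtain C1' C2' where L1: "linear_code R {1..m+d} C1'" and D1: "dim_ge R {1..m+d} C1' (m - a)"
    and L2: "linear_code R {1..n+g} C2'" and D2: "dim_ge R {1..n+g} C2' (n - b)"
    and CO: "corrects (grid (m+d) (n+g)) (tensor_code R (m+d) (n+g) C1' C2') (E \<union> (grid (m+d) (n+g) - grid m n))"
    using C unfolding topology_code_def by auto
  show ?thesis
    by (rule noncorr_core[OF am bn Eg F fin refl _ _ L1 D1 L2 D2 CO]) auto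
qed


theorem lemma7:
  fixes m n a b :: nat
  assumes "a < m" and "b < n"
    and "\<exists>E. E \<subseteq> grid m n \<and> regular m n a b E \<and> \<not> correctable m n a b E"
  shows "\<forall>\<delta> \<gamma> :: nat. \<exists>E'. E' \<subseteq> grid (m + \<delta>) (n + \<gamma>) \<and>
            regular (m + \<delta>) (n + \<gamma>) (a + \<delta>) (b + \<gamma>) E' \<and>
            \<not> correctable (m + \<delta>) (n + \<gamma>) (a + \<delta>) (b + \<gamma>) E'"
proof (intro allI)
  fix d g :: nat
  obtain E where E: "E \<subseteq> grid m n" "regular m n a b E" "\<not> correctable m n a b E"
    using assms(3) by blast
  have gg: "grid m n \<subseteq> grid (m+d) (n+g)" unfolding grid_def by auto
  show "\<exists>E'. E' \<subseteq> grid (m + d) (n + g) \<and>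
            regular (m + d) (n + g) (a + d) (b + g) E' \<and>
            \<not> correctable (m + d) (n + g) (a + d) (b + g) E'"
  proof (intro exI conjI)
    show "E \<union> (grid (m+d) (n+g) - grid m n) \<subseteq> grid (m + d) (n + g)" using E(1) gg by blast
    show "regular (m + d) (n + g) (a + d) (b + g) (E \<union> (grid (m+d) (n+g) - grid m n))"
      by (rule reg_ext[OF E(1,2)])
    show "\<not> correctable (m + d) (n + g) (a + d) (b + g) (E \<union> (grid (m+d) (n+g) - grid m n))"
      using noncorr[OF assms(1,2) E(1)] E(3) by blast
  qed
qed

end
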